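(* Let $\lambda\in\mathbb C$ be a root of $\chi(\lambda)=\prod_{k=1}^{m-1}(\lambda+k)-m!$ with $\Re(\lambda)>\frac12$. Then, as $n\to+\infty$, $Y_n\to Y_\infty$ almost surely and in $L^2$, where $Y_\infty$ is a complex random variable with variance $$\mathrm{Var}(Y_\infty)=\frac{m^2\,\mathbb E|A|^2-1}{1-m\,\mathbb E|A|^2}.$$
   Context: $m\ge2$ is an integer. $T=\tau_{(1)}+\dots+\tau_{(m-1)}$ where the $\tau_{(j)}$ are independent and $\tau_{(j)}$ is exponential with parameter $j$. Let $A=e^{-\lambda T}$, and let $A_u$, $u\in U=\bigcup_{n\ge1}\{1,\dots,m\}^n$, be independent copies of $A$, independent of $A$. Set $Y_0=1$, $Y_1=mA$, and for $n\ge2$, $Y_n=\sum_{u_1\dots u_{n-1}\in\{1,\dots,m\}^{n-1}}mAA_{u_1}A_{u_1u_2}\cdots A_{u_1\dots u_{n-1}}$. For a complex random variable $X$, $\mathrm{Var}X=\mathbb E|X-\mathbb EX|^2$. *)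

theory Defs
  imports "HOL-Probability.Probability"
begin

definition words :: "nat \<Rightarrow> nat \<Rightarrow> nat list set" where
  "words m k = {w. length w = k \<and> set w \<subseteq> {1..m}}"

definition Uwords :: "nat \<Rightarrow> nat list set" where
  "Uwords m = {u. u \<noteq> [] \<and> set u \<subseteq> {1..m}}"

definition Yseq :: "nat \<Rightarrow> ('a \<Rightarrow> complex) \<Rightarrow> (nat list \<Rightarrow> 'a \<Rightarrow> complex) \<Rightarrow> nat \<Rightarrow> 'a \<Rightarrow> complex" where
  "Yseq m A Au n \<omega> = (if n = 0 then 1 else
     (\<Sum>w\<in>words m (n - 1). of_nat m * A \<omega> * (\<Prod>k\<in>{1..n-1}. Au (take k w) \<omega>)))"

end

theory Submission
  imports Defs "HOL-Probability.Sinc_Integral"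
begin

definition Zg :: "nat \<Rightarrow> (nat list \<Rightarrow> complex) \<Rightarrow> nat \<Rightarrow> complex" where
  "Zg m g n = (if n = 0 then 1 else (\<Sum>w\<in>words m (n-1). of_nat m * (\<Prod>k<n. g (take k w))))"

lemma words_finite: "finite (words m k)"
  unfolding words_def using finite_lists_length_eq[of "{1..m}" k] by (simp add: conj_commute)

lemma words_card: "card (words m k) = m ^ k"
  unfolding words_def using card_lists_length_eq[of "{1..m}" k] by (simp add: conj_commute)

lemma words_0: "words m 0 = {[]}"
  unfolding words_def by auto

lemma words_Suc: "words m (Suc n) = (\<lambda>(i,v). i#v) ` ({1..m} \<times> words m n)"
  unfolding words_def
  by (auto simp: length_Suc_conv image_iff)

lemma Zg_Suc: "Zg m g (Suc n) = g [] * (\<Sum>i\<in>{1..m}. Zg m (\<lambda>u. g (i#u)) n)"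
proof (cases n)
  case 0
  then show ?thesis by (simp add: Zg_def words_0)
next
  case (Suc n')
  have inj: "inj_on (\<lambda>(i,v). i#v) ({1..m} \<times> words m n')"
    by (auto simp: inj_on_def)
  have "Zg m g (Suc n) = (\<Sum>w\<in>words m (Suc n'). of_nat m * (\<Prod>k<Suc (Suc n'). g (take k w)))"
    using Suc by (simp add: Zg_def)
  also have "\<dots> = (\<Sum>x\<in>{1..m} \<times> words m n'. of_nat m * (\<Prod>k<Suc (Suc n'). g (take k ((\<lambda>(i,v). i#v) x))))"
    unfolding words_Suc[of m n'] by (subst sum.reindex[OF inj]) (simp add: comp_def)
  also have "\<dots> = (\<Sum>i\<in>{1..m}. \<Sum>v\<in>words m n'. of_nat m * (\<Prod>k<Suc (Suc n'). g (take k (i#v))))"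
    by (subst sum.cartesian_product) (rule sum.cong, auto)
  also have "\<dots> = (\<Sum>i\<in>{1..m}. \<Sum>v\<in>words m n'. g [] * (of_nat m * (\<Prod>k<Suc n'. g (i # take k v))))"
    by (intro sum.cong refl) (simp add: prod.lessThan_Suc_shift del: prod.lessThan_Suc)
  also have "\<dots> = g [] * (\<Sum>i\<in>{1..m}. Zg m (\<lambda>u. g (i#u)) n)"
    using Suc by (simp add: Zg_def sum_distrib_left)
  finally show ?thesis .
qed

lemma take_in_T:
  assumes "w \<in> words m (n - 1)" "k < n"
  shows "length (take k w) < n \<and> set (take k w) \<subseteq> {1..m}"
  using assms set_take_subset[of k w] unfolding words_def by auto

lemma Zg_cong:
  assumes "\<And>u. length u < n \<Longrightarrow> set u \<subseteq> {1..m} \<Longrightarrow> g u = g' u"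
  shows "Zg m g n = Zg m g' n"
  unfolding Zg_def using take_in_T assms
  by (auto intro!: sum.cong prod.cong)

lemma Zg_meas:
  assumes "\<And>u. length u < n \<Longrightarrow> set u \<subseteq> {1..m} \<Longrightarrow> h u \<in> S"
  shows "(\<lambda>f. Zg m (\<lambda>u. f (h u)) n) \<in> borel_measurable (PiM S (\<lambda>_. borel))"
proof (cases "n = 0")
  case False
  have hh: "\<And>w k. w \<in> words m (n-1) \<Longrightarrow> k < n \<Longrightarrow> h (take k w) \<in> S"
    using take_in_T assms by blast
  have "(\<lambda>f. \<Sum>w\<in>words m (n - 1). (of_nat m :: complex) * (\<Prod>k<n. f (h (take k w)))) \<in> borel_measurable (PiM S (\<lambda>_. borel))"
    apply (rule borel_measurable_sum)
    apply (rule borel_measurable_times)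
     apply (rule borel_measurable_const)
    apply (rule borel_measurable_prod)
    apply (rule measurable_component_singleton[where M="\<lambda>_. borel", simplified])
    apply (simp add: hh)
    done
  then show ?thesis using False unfolding Zg_def by simp
qed (simp add: Zg_def)

lemma Zg_bound:
  assumes "\<And>u. length u < n \<Longrightarrow> set u \<subseteq> {1..m} \<Longrightarrow> norm (g u) \<le> 1"
  shows "norm (Zg m g n) \<le> real m ^ n"
proof (cases "n = 0")
  case False
  have "norm (Zg m g n) \<le> (\<Sum>w\<in>words m (n-1). norm (of_nat m * (\<Prod>k<n. g (take k w))))"
    using False unfolding Zg_def by (simp add: norm_sum)
  also have "\<dots> \<le> (\<Sum>w\<in>words m (n-1). real m)"
  proof (intro sum_mono)
    fix w assume w: "w \<in> words m (n-1)"
    have "norm (\<Prod>k<n. g (take k w)) \<le> (\<Prod>k<n. (1::real))"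
      unfolding prod_norm[symmetric] using take_in_T[OF w] assms
      by (intro prod_mono) auto
    then show "norm (of_nat m * (\<Prod>k<n. g (take k w))) \<le> real m"
      using mult_left_le[of "cmod (\<Prod>k<n. g (take k w))" "real m"] by (simp add: norm_mult)
  qed
  also have "\<dots> = real m ^ n"
    using False power_minus_mult[of n "real m"] by (simp add: words_card)
  finally show ?thesis .
qed (simp add: Zg_def)

lemma cnj_meas[measurable]: "cnj \<in> borel_measurable borel"
  by (intro borel_measurable_continuous_onI continuous_intros)

lemma cmod2_meas[measurable]: "(\<lambda>z::complex. complex_of_real ((cmod z)\<^sup>2)) \<in> borel_measurable borel"
  by (intro borel_measurable_continuous_onI continuous_intros)

definition SD :: "nat \<Rightarrow> nat list \<Rightarrow> nat list set" where
  "SD m p = {p @ u | u. u \<noteq> [] \<and> set u \<subseteq> {1..m}}"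
definition SS :: "nat \<Rightarrow> nat list \<Rightarrow> nat list set" where
  "SS m p = {p @ u | u. set u \<subseteq> {1..m}}"

locale tree = prob_space +
  fixes m :: nat and B :: "nat list \<Rightarrow> 'a \<Rightarrow> complex" and a :: real
  assumes m1: "1 \<le> m"
    and indB: "indep_vars (\<lambda>_. borel) B {u. set u \<subseteq> {1..m}}"
    and meanB: "\<And>u. set u \<subseteq> {1..m} \<Longrightarrow> expectation (B u) = 1 / of_nat m"
    and sqB: "\<And>u. set u \<subseteq> {1..m} \<Longrightarrow> expectation (\<lambda>\<omega>. (cmod (B u \<omega>))\<^sup>2) = a"
    and bndB: "AE \<omega> in M. \<forall>u\<in>{u. set u \<subseteq> {1..m}}. cmod (B u \<omega>) \<le> 1"
begin

lemma measB: "set u \<subseteq> {1..m} \<Longrightarrow> B u \<in> borel_measurable M"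
  using indB unfolding indep_vars_def by auto

definition Z where "Z p n \<omega> = Zg m (\<lambda>u. B (p @ u) \<omega>) n"

lemma restr_meas: "D \<subseteq> {u. set u \<subseteq> {1..m}} \<Longrightarrow>
   (\<lambda>\<omega>. restrict (\<lambda>u. B u \<omega>) D) \<in> measurable M (PiM D (\<lambda>_. borel))"
  by (rule measurable_restrict) (use measB in blast)

lemma SS_sub: "set p \<subseteq> {1..m} \<Longrightarrow> SS m p \<subseteq> {u. set u \<subseteq> {1..m}}"
  by (auto simp: SS_def subset_iff)
lemma SD_sub: "set p \<subseteq> {1..m} \<Longrightarrow> SD m p \<subseteq> {u. set u \<subseteq> {1..m}}"
  by (auto simp: SD_def subset_iff)

lemma Z_restr:
  assumes "set p \<subseteq> {1..m}"
  shows "Z p n \<omega> = Zg m (\<lambda>u. (restrict (\<lambda>u. B u \<omega>) (SS m p)) (p @ u)) n"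
  unfolding Z_def by (rule Zg_cong) (auto simp: SS_def)

lemma Z_meas_G: "set p \<subseteq> {1..m} \<Longrightarrow> (\<lambda>f. Zg m (\<lambda>u. f (p @ u)) n) \<in> borel_measurable (PiM (SS m p) (\<lambda>_. borel))"
  by (rule Zg_meas) (auto simp: SS_def)

lemma Z_meas[measurable]: assumes "set p \<subseteq> {1..m}" shows "Z p n \<in> borel_measurable M"
proof -
  have eq: "Z p n = (\<lambda>\<omega>. Zg m (\<lambda>u. (restrict (\<lambda>u. B u \<omega>) (SS m p)) (p @ u)) n)"
    by (rule ext) (rule Z_restr[OF assms])
  show ?thesis unfolding eq
    by (rule measurable_compose[OF restr_meas[OF SS_sub[OF assms]] Z_meas_G[OF assms]])
qed

lemma Z_bnd: "AE \<omega> in M. \<forall>p n. set p \<subseteq> {1..m} \<longrightarrow> cmod (Z p n \<omega>) \<le> real m ^ n"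
  using bndB by eventually_elim (auto simp: Z_def intro!: Zg_bound)

lemma Z_0[simp]: "Z p 0 \<omega> = 1"
  by (simp add: Z_def Zg_def)

lemma Z_Suc: "Z p (Suc n) \<omega> = B p \<omega> * (\<Sum>i\<in>{1..m}. Z (p@[i]) n \<omega>)"
  by (simp add: Z_def Zg_Suc)

lemma int_bound: "f \<in> borel_measurable M \<Longrightarrow> AE \<omega> in M. cmod (f \<omega>) \<le> C \<Longrightarrow> integrable M f"
  by (rule integrable_const_bound)

lemma ind1:
  assumes p: "set p \<subseteq> {1..m}" and G: "G \<in> borel_measurable (PiM (SD m p) (\<lambda>_. borel))"
    and H: "H \<in> borel_measurable (borel :: complex measure)"
  shows "indep_var borel (\<lambda>\<omega>. H (B p \<omega>)) borel (\<lambda>\<omega>. G (restrict (\<lambda>u. B u \<omega>) (SD m p)))"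
proof -
  have "indep_var (PiM {p} (\<lambda>_. borel)) (\<lambda>\<omega>. restrict (\<lambda>u. B u \<omega>) {p})
                  (PiM (SD m p) (\<lambda>_. borel)) (\<lambda>\<omega>. restrict (\<lambda>u. B u \<omega>) (SD m p))"
    by (rule indep_var_restrict[OF indB]) (use p in \<open>auto simp: SD_def subset_iff\<close>)
  then have "indep_var borel ((\<lambda>f. H (f p)) \<circ> (\<lambda>\<omega>. restrict (\<lambda>u. B u \<omega>) {p}))
                   borel (G \<circ> (\<lambda>\<omega>. restrict (\<lambda>u. B u \<omega>) (SD m p)))"
  proof (rule indep_var_compose[OF _ _ G])
    show "(\<lambda>f. H (f p)) \<in> borel_measurable (PiM {p} (\<lambda>_. borel))"
      by (rule measurable_compose[OF measurable_component_singleton[where M="\<lambda>_. borel", simplified] H]) simp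
  qed
  then show ?thesis by (simp add: comp_def)
qed

lemma ind2:
  assumes p: "set p \<subseteq> {1..m}" and ij: "i \<in> {1..m}" "j \<in> {1..m}" "i \<noteq> j"
    and G1: "G1 \<in> borel_measurable (PiM (SS m (p@[i])) (\<lambda>_. borel))"
    and G2: "G2 \<in> borel_measurable (PiM (SS m (p@[j])) (\<lambda>_. borel))"
  shows "indep_var borel (\<lambda>\<omega>. G1 (restrict (\<lambda>u. B u \<omega>) (SS m (p@[i]))))
                   borel (\<lambda>\<omega>. G2 (restrict (\<lambda>u. B u \<omega>) (SS m (p@[j]))))"
proof -
  have "indep_var (PiM (SS m (p@[i])) (\<lambda>_. borel)) (\<lambda>\<omega>. restrict (\<lambda>u. B u \<omega>) (SS m (p@[i])))
                  (PiM (SS m (p@[j])) (\<lambda>_. borel)) (\<lambda>\<omega>. restrict (\<lambda>u. B u \<omega>) (SS m (p@[j])))"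
    by (rule indep_var_restrict[OF indB]) (use p ij in \<open>auto simp: SS_def subset_iff\<close>)
  then have "indep_var borel (G1 \<circ> (\<lambda>\<omega>. restrict (\<lambda>u. B u \<omega>) (SS m (p@[i]))))
                   borel (G2 \<circ> (\<lambda>\<omega>. restrict (\<lambda>u. B u \<omega>) (SS m (p@[j]))))"
    by (rule indep_var_compose[OF _ G1 G2])
  then show ?thesis by (simp add: comp_def)
qed

end

fun sseq :: "nat \<Rightarrow> real \<Rightarrow> nat \<Rightarrow> real" where
  "sseq m a 0 = 1"
| "sseq m a (Suc n) = a * (real m * sseq m a n + real m * (real m - 1))"

context tree begin

lemma B_int: "set p \<subseteq> {1..m} \<Longrightarrow> integrable M (B p)"
  by (rule int_bound[where C=1]) (use bndB measB in \<open>auto elim!: eventually_mono\<close>)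

lemma Z_int: "set p \<subseteq> {1..m} \<Longrightarrow> integrable M (Z p n)"
  by (rule int_bound[where C="real m ^ n"]) (use Z_bnd Z_meas in \<open>auto elim!: eventually_mono\<close>)

lemma ZZ_int: "set p \<subseteq> {1..m} \<Longrightarrow> set q \<subseteq> {1..m} \<Longrightarrow> integrable M (\<lambda>\<omega>. Z p r \<omega> * cnj (Z q s \<omega>))"
proof (rule int_bound[where C="real m ^ r * real m ^ s"])
  assume p: "set p \<subseteq> {1..m}" and q: "set q \<subseteq> {1..m}"
  show "(\<lambda>\<omega>. Z p r \<omega> * cnj (Z q s \<omega>)) \<in> borel_measurable M"
    using Z_meas[OF p] Z_meas[OF q] by measurable
  show "AE \<omega> in M. cmod (Z p r \<omega> * cnj (Z q s \<omega>)) \<le> real m ^ r * real m ^ s"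
    using Z_bnd
  proof eventually_elim
    case (elim \<omega>)
    then show ?case using p q by (auto simp: norm_mult intro!: mult_mono)
  qed
qed

lemma SD_Cons: "set p \<subseteq> {1..m} \<Longrightarrow> i \<in> {1..m} \<Longrightarrow> set u \<subseteq> {1..m} \<Longrightarrow> p @ i # u \<in> SD m p"
  unfolding SD_def by (intro CollectI exI[of _ "i#u"]) auto

lemma EZ: "set p \<subseteq> {1..m} \<Longrightarrow> expectation (Z p n) = 1"
proof (induction n arbitrary: p)
  case 0
  then show ?case by (simp add: prob_space)
next
  case (Suc n)
  note p = Suc.prems
  define GW where "GW f = (\<Sum>i\<in>{1..m}. Zg m (\<lambda>u. f (p @ i # u)) n)" for f :: "nat list \<Rightarrow> complex"
  have Wr: "(\<Sum>i\<in>{1..m}. Z (p@[i]) n \<omega>) = GW (restrict (\<lambda>u. B u \<omega>) (SD m p))" for \<omega>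
    unfolding GW_def Z_def
    by (intro sum.cong refl Zg_cong) (use SD_Cons p in auto)
  have GWm: "GW \<in> borel_measurable (PiM (SD m p) (\<lambda>_. borel))"
    unfolding GW_def by (intro borel_measurable_sum Zg_meas) (use SD_Cons p in auto)
  have ind: "indep_var borel (\<lambda>\<omega>. B p \<omega>) borel (\<lambda>\<omega>. \<Sum>i\<in>{1..m}. Z (p@[i]) n \<omega>)"
    using ind1[OF p GWm, of "\<lambda>z. z"] unfolding Wr[symmetric] by simp
  have pi: "\<And>i. i \<in> {1..m} \<Longrightarrow> set (p@[i]) \<subseteq> {1..m}" using p by auto
  have "expectation (Z p (Suc n)) = expectation (\<lambda>\<omega>. B p \<omega> * (\<Sum>i\<in>{1..m}. Z (p@[i]) n \<omega>))"
    by (rule arg_cong[where f=expectation]) (simp add: fun_eq_iff Z_Suc)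
  also have "\<dots> = expectation (B p) * expectation (\<lambda>\<omega>. \<Sum>i\<in>{1..m}. Z (p@[i]) n \<omega>)"
    by (rule indep_var_lebesgue_integral[OF ind B_int[OF p]]) (use Z_int pi in auto)
  also have "\<dots> = 1 / of_nat m * (\<Sum>i\<in>{1..m}. 1)"
    using Suc.IH pi Z_int meanB[OF p] by (simp add: Bochner_Integration.integral_sum)
  also have "\<dots> = 1" using m1 by simp
  finally show ?case .
qed

lemma GZ: "set p \<subseteq> {1..m} \<Longrightarrow> q \<le> r \<Longrightarrow>
  expectation (\<lambda>\<omega>. Z p r \<omega> * cnj (Z p q \<omega>)) = complex_of_real (sseq m a q)"
proof (induction q arbitrary: p r)
  case 0
  then show ?case using EZ by simp
next
  case (Suc q)
  note p = Suc.prems(1)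
  obtain r' where r: "r = Suc r'" "q \<le> r'" using Suc.prems(2) by (cases r) auto
  have pi: "\<And>i. i \<in> {1..m} \<Longrightarrow> set (p@[i]) \<subseteq> {1..m}" using p by auto
  define W2 where "W2 \<omega> = (\<Sum>i\<in>{1..m}. \<Sum>j\<in>{1..m}. Z (p@[i]) r' \<omega> * cnj (Z (p@[j]) q \<omega>))" for \<omega>
  define G2 where "G2 f = (\<Sum>i\<in>{1..m}. \<Sum>j\<in>{1..m}. Zg m (\<lambda>u. f (p @ i # u)) r' * cnj (Zg m (\<lambda>u. f (p @ j # u)) q))"
    for f :: "nat list \<Rightarrow> complex"
  have Wr: "W2 \<omega> = G2 (restrict (\<lambda>u. B u \<omega>) (SD m p))" for \<omega>
    unfolding G2_def W2_def Z_def
    by (intro sum.cong refl arg_cong2[where f="\<lambda>x y. x * cnj y"] Zg_cong) (use SD_Cons p in auto)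
  have G2m: "G2 \<in> borel_measurable (PiM (SD m p) (\<lambda>_. borel))"
    unfolding G2_def
    by (intro borel_measurable_sum borel_measurable_times measurable_compose[OF _ cnj_meas] Zg_meas)
       (use SD_Cons p in auto)
  have ind: "indep_var borel (\<lambda>\<omega>. complex_of_real ((cmod (B p \<omega>))\<^sup>2)) borel W2"
    using ind1[OF p G2m cmod2_meas] unfolding Wr[symmetric] by simp
  have eq: "Z p r \<omega> * cnj (Z p (Suc q) \<omega>) = complex_of_real ((cmod (B p \<omega>))\<^sup>2) * W2 \<omega>" for \<omega>
    unfolding r Z_Suc W2_def complex_norm_square by (simp add: sum_product algebra_simps)
  have int2: "integrable M (\<lambda>\<omega>. complex_of_real ((cmod (B p \<omega>))\<^sup>2))"
    using B_int[OF p] measB[OF p]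
    by (intro int_bound[where C=1]) (use bndB p in \<open>auto elim!: eventually_mono simp: norm_power intro!: power_le_one\<close>)
  have intW: "integrable M W2"
    unfolding W2_def by (intro Bochner_Integration.integrable_sum ZZ_int pi) 
  have inner: "expectation (\<lambda>\<omega>. Z (p@[i]) r' \<omega> * cnj (Z (p@[j]) q \<omega>)) = (if i = j then complex_of_real (sseq m a q) else 1)"
    if ij: "i \<in> {1..m}" "j \<in> {1..m}" for i j
  proof (cases "i = j")
    case True
    then show ?thesis using Suc.IH[OF pi[OF ij(1)] r(2)] by simp
  next
    case False
    have "indep_var borel (\<lambda>\<omega>. Zg m (\<lambda>u. (restrict (\<lambda>u. B u \<omega>) (SS m (p@[i]))) ((p@[i]) @ u)) r')
                    borel (\<lambda>\<omega>. cnj (Zg m (\<lambda>u. (restrict (\<lambda>u. B u \<omega>) (SS m (p@[j]))) ((p@[j]) @ u)) q))"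
      by (rule ind2[OF p ij False Z_meas_G[OF pi[OF ij(1)]] measurable_compose[OF Z_meas_G[OF pi[OF ij(2)]] cnj_meas]])
    moreover have e1: "Z (p@[i]) r' = (\<lambda>\<omega>. Zg m (\<lambda>u. (restrict (\<lambda>u. B u \<omega>) (SS m (p@[i]))) ((p@[i]) @ u)) r')"
      by (rule ext) (rule Z_restr[OF pi[OF ij(1)]])
    moreover have e2: "(\<lambda>\<omega>. cnj (Z (p@[j]) q \<omega>)) = (\<lambda>\<omega>. cnj (Zg m (\<lambda>u. (restrict (\<lambda>u. B u \<omega>) (SS m (p@[j]))) ((p@[j]) @ u)) q))"
      by (rule ext) (subst Z_restr[OF pi[OF ij(2)]], rule refl)
    ultimately have ind: "indep_var borel (Z (p@[i]) r') borel (\<lambda>\<omega>. cnj (Z (p@[j]) q \<omega>))"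
      by metis
    show ?thesis
      using indep_var_lebesgue_integral[OF ind Z_int[OF pi[OF ij(1)]]] Z_int[OF pi[OF ij(2)]]
        EZ[OF pi[OF ij(1)]] EZ[OF pi[OF ij(2)]] False by simp
  qed
  have sumj: "(\<Sum>j\<in>{1..m}. if i = j then x else (1::complex)) = x + of_nat m - 1" if "i \<in> {1..m}" for i x
  proof -
    have "(\<Sum>j\<in>{1..m}. if i = j then x else (1::complex)) = x + (\<Sum>j\<in>{1..m} - {i}. 1)"
      using that by (subst sum.remove[of _ i]) auto
    also have "\<dots> = x + of_nat m - 1" using that by (simp add: of_nat_diff)
    finally show ?thesis .
  qed
  have "expectation (\<lambda>\<omega>. Z p r \<omega> * cnj (Z p (Suc q) \<omega>))
      = expectation (\<lambda>\<omega>. complex_of_real ((cmod (B p \<omega>))\<^sup>2)) * expectation W2"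
    unfolding eq by (rule indep_var_lebesgue_integral[OF ind int2 intW])
  also have "expectation W2 = (\<Sum>i\<in>{1..m}. \<Sum>j\<in>{1..m}. if i = j then complex_of_real (sseq m a q) else 1)"
    unfolding W2_def
    apply (subst Bochner_Integration.integral_sum, use ZZ_int pi in \<open>auto intro!: Bochner_Integration.integrable_sum\<close>)+
    apply (intro sum.cong refl)
    apply (rule inner)
    apply auto
    done
  also have "\<dots> = of_nat m * (complex_of_real (sseq m a q) + of_nat m - 1)"
    using sumj by simp
  also have "expectation (\<lambda>\<omega>. complex_of_real ((cmod (B p \<omega>))\<^sup>2)) = complex_of_real a"
    by (subst integral_complex_of_real) (simp add: sqB[OF p])
  finally show ?case
    by (simp add: algebra_simps)
qed

end

lemma sseq_aux: "a * (real m * (1 + (real m ^ 2 * a - 1) * S) + real m * (real m - 1)) = 1 + (real m ^ 2 * a - 1) * (1 + (real m * a) * S)"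
  by (simp add: algebra_simps power2_eq_square)

lemma sseq_closed: "sseq m a n = 1 + (real m ^ 2 * a - 1) * (\<Sum>k<n. (real m * a) ^ k)"
proof (induction n)
  case (Suc n)
  have S: "(\<Sum>k<Suc n. (real m * a) ^ k) = 1 + (real m * a) * (\<Sum>k<n. (real m * a) ^ k)"
    by (simp add: sum.lessThan_Suc_shift sum_distrib_left del: sum.lessThan_Suc)
  show ?case unfolding S sseq.simps Suc.IH by (rule sseq_aux)
qed simp

lemma sseq_lim:
  assumes "0 \<le> real m * a" "real m * a < 1"
  shows "(\<lambda>n. sseq m a n) \<longlonglongrightarrow> 1 + (real m ^ 2 * a - 1) / (1 - real m * a)"
proof -
  have "(\<lambda>k. (real m * a) ^ k) sums (1 / (1 - real m * a))"
    by (rule geometric_sums) (use assms in auto)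
  then have "(\<lambda>n. \<Sum>k<n. (real m * a) ^ k) \<longlonglongrightarrow> 1 / (1 - real m * a)"
    by (simp add: sums_def)
  then have "(\<lambda>n. 1 + (real m ^ 2 * a - 1) * (\<Sum>k<n. (real m * a) ^ k)) \<longlonglongrightarrow> 1 + (real m ^ 2 * a - 1) * (1 / (1 - real m * a))"
    by (intro tendsto_intros)
  then show ?thesis unfolding sseq_closed by simp
qed

lemma sseq_diff: "sseq m a (Suc n) - sseq m a n = (real m ^ 2 * a - 1) * (real m * a) ^ n"
  unfolding sseq_closed by (simp add: algebra_simps)

lemma sseq_mono: "0 \<le> real m ^ 2 * a - 1 \<Longrightarrow> 0 \<le> real m * a \<Longrightarrow> n \<le> p \<Longrightarrow> sseq m a n \<le> sseq m a p"
  unfolding sseq_closed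
  by (intro add_left_mono mult_left_mono sum_mono2) auto

context tree begin

lemma a_nonneg: "0 \<le> a"
proof -
  have "0 \<le> expectation (\<lambda>\<omega>. (cmod (B [] \<omega>))\<^sup>2)" by (intro integral_nonneg_AE) simp
  then show ?thesis using sqB[of "[]"] by simp
qed

lemma E_sq_diff:
  assumes "q \<le> p"
  shows "expectation (\<lambda>\<omega>. (cmod (Z [] p \<omega> - Z [] q \<omega>))\<^sup>2) = sseq m a p - sseq m a q"
proof -
  have i: "\<And>r s. integrable M (\<lambda>\<omega>. Z [] r \<omega> * cnj (Z [] s \<omega>))" by (rule ZZ_int) auto
  have c: "expectation (\<lambda>\<omega>. Z [] q \<omega> * cnj (Z [] p \<omega>)) = complex_of_real (sseq m a q)"
  proof -
    have "expectation (\<lambda>\<omega>. Z [] q \<omega> * cnj (Z [] p \<omega>)) = expectation (\<lambda>\<omega>. cnj (Z [] p \<omega> * cnj (Z [] q \<omega>)))"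
      by (simp add: ac_simps)
    also have "\<dots> = cnj (expectation (\<lambda>\<omega>. Z [] p \<omega> * cnj (Z [] q \<omega>)))"
      by (rule Bochner_Integration.integral_cnj)
    also have "\<dots> = complex_of_real (sseq m a q)" using GZ[of "[]" q p] assms by simp
    finally show ?thesis .
  qed
  have "complex_of_real (expectation (\<lambda>\<omega>. (cmod (Z [] p \<omega> - Z [] q \<omega>))\<^sup>2))
     = expectation (\<lambda>\<omega>. complex_of_real ((cmod (Z [] p \<omega> - Z [] q \<omega>))\<^sup>2))"
    by (rule integral_complex_of_real[symmetric])
  also have "\<dots> = expectation (\<lambda>\<omega>. (Z [] p \<omega> * cnj (Z [] p \<omega>) - Z [] p \<omega> * cnj (Z [] q \<omega>))
       - (Z [] q \<omega> * cnj (Z [] p \<omega>) - Z [] q \<omega> * cnj (Z [] q \<omega>)))"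
    unfolding complex_norm_square by (simp add: algebra_simps)
  also have "\<dots> = (expectation (\<lambda>\<omega>. Z [] p \<omega> * cnj (Z [] p \<omega>)) - expectation (\<lambda>\<omega>. Z [] p \<omega> * cnj (Z [] q \<omega>)))
       - (expectation (\<lambda>\<omega>. Z [] q \<omega> * cnj (Z [] p \<omega>)) - expectation (\<lambda>\<omega>. Z [] q \<omega> * cnj (Z [] q \<omega>)))"
    using i by simp
  also have "\<dots> = complex_of_real (sseq m a p - sseq m a q)"
    using GZ[of "[]" p p] GZ[of "[]" q p] GZ[of "[]" q q] assms c by simp
  finally show ?thesis by (simp only: of_real_eq_iff)
qed

end

lemma amgm_aux: "0 < (x::real) \<Longrightarrow> t \<le> (x + t^2 / x) / 2"
proof -
  assume x: "0 < x"
  have "0 \<le> (t - x)^2" by simp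
  then have "2 * t * x \<le> x * x + t^2" by (simp add: power2_eq_square algebra_simps)
  then show ?thesis using x by (simp add: field_simps power2_eq_square)
qed

context tree begin

lemma sq_int: "integrable M (\<lambda>\<omega>. (cmod (Z [] p \<omega> - Z [] q \<omega>))\<^sup>2)"
proof (rule integrable_const_bound[where B="(real m ^ p + real m ^ q)^2"])
  show "(\<lambda>\<omega>. (cmod (Z [] p \<omega> - Z [] q \<omega>))\<^sup>2) \<in> borel_measurable M"
    using Z_meas[of "[]" p] Z_meas[of "[]" q] by measurable
  show "AE \<omega> in M. norm ((cmod (Z [] p \<omega> - Z [] q \<omega>))\<^sup>2) \<le> (real m ^ p + real m ^ q)^2"
    using Z_bnd
  proof eventually_elim
    case (elim \<omega>)
    have "cmod (Z [] p \<omega> - Z [] q \<omega>) \<le> real m ^ p + real m ^ q"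
    proof -
      have "cmod (Z [] p \<omega>) \<le> real m ^ p" "cmod (Z [] q \<omega>) \<le> real m ^ q" using elim by auto
      then show ?thesis using norm_triangle_ineq4[of "Z [] p \<omega>" "Z [] q \<omega>"] by linarith
    qed
    then show ?case by (simp add: power_mono)
  qed
qed

lemma AE_conv:
  assumes ma: "real m * a < 1"
  shows "AE \<omega> in M. convergent (\<lambda>n. Z [] n \<omega>)"
proof -
  define \<rho> where "\<rho> = real m * a"
  define r where "r = (1 + \<rho>) / 2"
  define c0 where "c0 = real m ^ 2 * a - 1"
  have \<rho>0: "0 \<le> \<rho>" unfolding \<rho>_def using a_nonneg by simp
  have r0: "0 < r" "r < 1" "\<rho> < r" using \<rho>0 ma[folded \<rho>_def] unfolding r_def by auto
  have Ed: "expectation (\<lambda>\<omega>. (cmod (Z [] (Suc n) \<omega> - Z [] n \<omega>))\<^sup>2) = c0 * \<rho> ^ n" for n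
    using E_sq_diff[of n "Suc n"] sseq_diff[of m a n] unfolding c0_def \<rho>_def by simp
  have c00: "0 \<le> c0"
    using Ed[of 0] integral_nonneg_AE[of "\<lambda>\<omega>. (cmod (Z [] (Suc 0) \<omega> - Z [] 0 \<omega>))\<^sup>2" M] by simp
  define f where "f n \<omega> = (cmod (Z [] (Suc n) \<omega> - Z [] n \<omega>))\<^sup>2 / r ^ n" for n \<omega>
  have fm: "f n \<in> borel_measurable M" for n
    unfolding f_def using Z_meas[of "[]" n] Z_meas[of "[]" "Suc n"] by measurable
  have f0: "0 \<le> f n \<omega>" for n \<omega> unfolding f_def using r0 by simp
  have nnf: "(\<integral>\<^sup>+\<omega>. ennreal (f n \<omega>) \<partial>M) = ennreal (c0 * (\<rho> / r) ^ n)" for n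
  proof -
    have "integrable M (f n)" unfolding f_def by (intro integrable_divide sq_int)
    then have "(\<integral>\<^sup>+\<omega>. ennreal (f n \<omega>) \<partial>M) = ennreal (expectation (f n))"
      by (intro nn_integral_eq_integral) (auto simp: f0)
    also have "expectation (f n) = c0 * \<rho> ^ n / r ^ n"
      unfolding f_def using Ed by simp
    finally show ?thesis by (simp add: power_divide)
  qed
  have sg: "summable (\<lambda>n. c0 * (\<rho> / r) ^ n)"
    by (intro summable_mult summable_geometric) (use \<rho>0 r0 in auto)
  have "(\<integral>\<^sup>+\<omega>. (\<Sum>n. ennreal (f n \<omega>)) \<partial>M) = (\<Sum>n. \<integral>\<^sup>+\<omega>. ennreal (f n \<omega>) \<partial>M)"
    by (rule nn_integral_suminf) (use fm in measurable)
  also have "\<dots> = (\<Sum>n. ennreal (c0 * (\<rho> / r) ^ n))" using nnf by simp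
  also have "\<dots> = ennreal (\<Sum>n. c0 * (\<rho> / r) ^ n)"
    by (rule suminf_ennreal2) (use c00 \<rho>0 r0 sg in auto)
  finally have fin: "(\<integral>\<^sup>+\<omega>. (\<Sum>n. ennreal (f n \<omega>)) \<partial>M) \<noteq> \<infinity>" by simp
  have "AE \<omega> in M. (\<Sum>n. ennreal (f n \<omega>)) \<noteq> \<infinity>"
    by (rule nn_integral_PInf_AE[OF _ fin]) (use fm in measurable)
  then show ?thesis
  proof eventually_elim
    case (elim \<omega>)
    then have sf: "summable (\<lambda>n. f n \<omega>)"
      by (intro summable_suminf_not_top f0) simp
    have sm: "summable (\<lambda>n. (r ^ n + f n \<omega>) / 2)"
      by (intro summable_divide summable_add summable_geometric sf) (use r0 in auto)
    have bnd: "norm (cmod (Z [] (Suc n) \<omega> - Z [] n \<omega>)) \<le> (r ^ n + f n \<omega>) / 2" for n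
      unfolding f_def using amgm_aux[of "r^n" "cmod (Z [] (Suc n) \<omega> - Z [] n \<omega>)"] r0 by simp
    then have ex: "\<exists>N. \<forall>n\<ge>N. norm (cmod (Z [] (Suc n) \<omega> - Z [] n \<omega>)) \<le> (r ^ n + f n \<omega>) / 2"
      by blast
    have "summable (\<lambda>n. cmod (Z [] (Suc n) \<omega> - Z [] n \<omega>))"
      by (rule summable_comparison_test[OF ex sm])
    then have "summable (\<lambda>n. Z [] (Suc n) \<omega> - Z [] n \<omega>)"
      by (rule summable_norm_cancel)
    then have "(\<lambda>n. \<Sum>k<n. Z [] (Suc k) \<omega> - Z [] k \<omega>) \<longlonglongrightarrow> (\<Sum>k. Z [] (Suc k) \<omega> - Z [] k \<omega>)"
      by (rule summable_LIMSEQ)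
    then have "(\<lambda>n. Z [] n \<omega> - 1) \<longlonglongrightarrow> (\<Sum>k. Z [] (Suc k) \<omega> - Z [] k \<omega>)"
      by (simp add: sum_lessThan_telescope[of "\<lambda>k. Z [] k \<omega>"])
    then have "(\<lambda>n. (Z [] n \<omega> - 1) + 1) \<longlonglongrightarrow> (\<Sum>k. Z [] (Suc k) \<omega> - Z [] k \<omega>) + 1"
      by (intro tendsto_intros)
    then show ?case unfolding convergent_def by auto
  qed
qed

end

lemma disc_aux:
  fixes A B C :: real
  assumes A: "0 \<le> A" and H: "\<And>t. 0 \<le> t^2 * A - 2*t*C + B"
  shows "C^2 \<le> A * B"
proof (cases "A = 0")
  case True
  show ?thesis
  proof (cases "C = 0")
    case False
    have "0 \<le> ((B+1)/(2*C))^2 * A - 2*((B+1)/(2*C))*C + B" by (rule H)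
    then show ?thesis using True False by (simp add: field_simps)
  qed (simp add: True)
next
  case False
  then have A': "0 < A" using A by simp
  have "0 \<le> (C/A)^2 * A - 2*(C/A)*C + B" by (rule H)
  then have "0 \<le> B - C^2 / A" using A' by (simp add: power2_eq_square field_simps)
  then show ?thesis using A' by (simp add: field_simps)
qed

lemma prod_le_sq: fixes x y :: real shows "\<bar>x\<bar> * \<bar>y\<bar> \<le> x^2 + y^2"
proof -
  have "0 \<le> (\<bar>x\<bar> - \<bar>y\<bar>)^2" by simp
  then have "2*(\<bar>x\<bar>*\<bar>y\<bar>) \<le> x^2 + y^2" by (simp add: power2_diff)
  moreover have "0 \<le> \<bar>x\<bar>*\<bar>y\<bar>" by simp
  ultimately show ?thesis by linarith
qed

lemma (in prob_space) CS:
  fixes f g :: "'a \<Rightarrow> real"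
  assumes fm: "f \<in> borel_measurable M" and gm: "g \<in> borel_measurable M"
    and fi: "integrable M (\<lambda>x. (f x)^2)" and gi: "integrable M (\<lambda>x. (g x)^2)"
  shows "integrable M (\<lambda>x. f x * g x)"
    and "(expectation (\<lambda>x. f x * g x))^2 \<le> expectation (\<lambda>x. (f x)^2) * expectation (\<lambda>x. (g x)^2)"
proof -
  show fgi: "integrable M (\<lambda>x. f x * g x)"
  proof (rule Bochner_Integration.integrable_bound[OF Bochner_Integration.integrable_add[OF fi gi]])
    show "(\<lambda>x. f x * g x) \<in> borel_measurable M" using fm gm by measurable
    show "AE x in M. norm (f x * g x) \<le> norm ((f x)^2 + (g x)^2)"
    proof (intro AE_I2)
      fix x
      have "\<bar>f x\<bar> * \<bar>g x\<bar> \<le> (f x)^2 + (g x)^2" by (rule prod_le_sq)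
      then show "norm (f x * g x) \<le> norm ((f x)^2 + (g x)^2)" by (simp add: abs_mult)
    qed
  qed
  show "(expectation (\<lambda>x. f x * g x))^2 \<le> expectation (\<lambda>x. (f x)^2) * expectation (\<lambda>x. (g x)^2)"
  proof (rule disc_aux)
    show "0 \<le> expectation (\<lambda>x. (f x)^2)" by (intro integral_nonneg_AE) simp
    fix t :: real
    have "0 \<le> expectation (\<lambda>x. (t * f x - g x)^2)" by (intro integral_nonneg_AE) simp
    also have "expectation (\<lambda>x. (t * f x - g x)^2) =
       expectation (\<lambda>x. t^2 * (f x)^2 - 2 * t * (f x * g x) + (g x)^2)"
      by (simp add: power2_eq_square algebra_simps)
    also have "\<dots> = t^2 * expectation (\<lambda>x. (f x)^2) - 2 * t * expectation (\<lambda>x. f x * g x) + expectation (\<lambda>x. (g x)^2)"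
      using fi gi fgi by simp
    finally show "0 \<le> t^2 * expectation (\<lambda>x. (f x)^2) - 2 * t * expectation (\<lambda>x. f x * g x) + expectation (\<lambda>x. (g x)^2)" .
  qed
qed

lemma (in prob_space) L1L2:
  fixes X :: "'a \<Rightarrow> complex"
  assumes Xm: "X \<in> borel_measurable M" and Xi: "integrable M (\<lambda>x. (cmod (X x))^2)"
  shows "integrable M X" and "(cmod (expectation X))^2 \<le> expectation (\<lambda>x. (cmod (X x))^2)"
proof -
  have c: "integrable M (\<lambda>x. cmod (X x) * 1)" and
    ineq: "(expectation (\<lambda>x. cmod (X x) * 1))^2 \<le> expectation (\<lambda>x. (cmod (X x))^2) * expectation (\<lambda>x. (1::real)^2)"
    using CS[of "\<lambda>x. cmod (X x)" "\<lambda>_. 1"] Xm Xi by auto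
  show Xint: "integrable M X"
    using c Xm by (simp add: integrable_norm_iff)
  have "cmod (expectation X) \<le> expectation (\<lambda>x. cmod (X x))"
    by (rule integral_norm_bound)
  moreover have "0 \<le> cmod (expectation X)" by simp
  ultimately have "(cmod (expectation X))^2 \<le> (expectation (\<lambda>x. cmod (X x)))^2"
    by (simp add: power_mono)
  also have "\<dots> \<le> expectation (\<lambda>x. (cmod (X x))^2)" using ineq by (simp add: prob_space)
  finally show "(cmod (expectation X))^2 \<le> expectation (\<lambda>x. (cmod (X x))^2)" .
qed

lemma cmod_sq_bound: "(cmod (z::complex))^2 \<le> 2 * (cmod (1 - z))^2 + 2"
proof -
  have "cmod z \<le> 1 + cmod (1 - z)" using norm_triangle_ineq4[of 1 "1 - z"] by simp
  then have "(cmod z)^2 \<le> (1 + cmod (1 - z))^2" by (simp add: power_mono)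
  moreover have "0 \<le> (cmod (1 - z) - 1)^2" by simp
  ultimately show ?thesis by (simp add: power2_sum power2_diff)
qed

lemma cross_bound: "\<bar>(cmod (u + w))^2 - (cmod u)^2 - (cmod w)^2\<bar> \<le> 2 * (cmod u * cmod w)"
proof -
  have up: "cmod (u + w) \<le> cmod u + cmod w" by (rule norm_triangle_ineq)
  have lo: "\<bar>cmod u - cmod w\<bar> \<le> cmod (u + w)"
    using norm_triangle_ineq3[of u "-w"] by simp
  have "(cmod (u + w))^2 \<le> (cmod u + cmod w)^2" using up by (simp add: power_mono)
  moreover have "(\<bar>cmod u - cmod w\<bar>)^2 \<le> (cmod (u + w))^2" using power_mono[OF lo abs_ge_zero, of 2] by simp
  ultimately show ?thesis
    by (simp add: power2_sum power2_diff abs_le_iff)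
qed

locale tree2 = tree +
  assumes ma: "real m * a < 1"
begin

definition Yinf where "Yinf \<omega> = lim (\<lambda>n. Z [] n \<omega>)"
definition L where "L = 1 + (real m ^ 2 * a - 1) / (1 - real m * a)"

lemma Yinf_meas[measurable]: "Yinf \<in> borel_measurable M"
  unfolding Yinf_def using Z_meas[of "[]"] by measurable

lemma Yinf_conv: "AE \<omega> in M. (\<lambda>n. Z [] n \<omega>) \<longlonglongrightarrow> Yinf \<omega>"
  using AE_conv[OF ma] by eventually_elim (simp add: Yinf_def convergent_LIMSEQ_iff)

lemma c0_nonneg: "0 \<le> real m ^ 2 * a - 1"
proof -
  have "0 \<le> expectation (\<lambda>\<omega>. (cmod (Z [] (Suc 0) \<omega> - Z [] 0 \<omega>))\<^sup>2)"
    by (intro integral_nonneg_AE) simp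
  also have "expectation (\<lambda>\<omega>. (cmod (Z [] (Suc 0) \<omega> - Z [] 0 \<omega>))\<^sup>2) = sseq m a (Suc 0) - sseq m a 0"
    by (rule E_sq_diff) simp
  also have "\<dots> = real m ^ 2 * a - 1"
    by (simp only: sseq_diff power_0 mult_1_right)
  finally show ?thesis .
qed

lemma sseq_L: "(\<lambda>n. sseq m a n) \<longlonglongrightarrow> L"
  unfolding L_def by (rule sseq_lim) (use a_nonneg ma in auto)

lemma sseq_le_L: "sseq m a n \<le> L"
proof (rule LIMSEQ_le_const[OF sseq_L])
  show "\<exists>N. \<forall>p\<ge>N. sseq m a n \<le> sseq m a p"
    using sseq_mono[OF c0_nonneg] a_nonneg by auto
qed

lemma L2_bound:
  shows "integrable M (\<lambda>\<omega>. (cmod (Z [] n \<omega> - Yinf \<omega>))\<^sup>2)"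
    and "expectation (\<lambda>\<omega>. (cmod (Z [] n \<omega> - Yinf \<omega>))\<^sup>2) \<le> L - sseq m a n"
proof -
  define g where "g p \<omega> = ennreal ((cmod (Z [] n \<omega> - Z [] p \<omega>))\<^sup>2)" for p \<omega>
  have gm: "g p \<in> borel_measurable M" for p
    unfolding g_def using Z_meas[of "[]" n] Z_meas[of "[]" p] by measurable
  have ae: "AE \<omega> in M. liminf (\<lambda>p. g p \<omega>) = ennreal ((cmod (Z [] n \<omega> - Yinf \<omega>))\<^sup>2)"
    using Yinf_conv
  proof eventually_elim
    case (elim \<omega>)
    have "(\<lambda>p. g p \<omega>) \<longlonglongrightarrow> ennreal ((cmod (Z [] n \<omega> - Yinf \<omega>))\<^sup>2)"
      unfolding g_def by (intro tendsto_intros elim)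
    then show ?case by (rule lim_imp_Liminf[OF trivial_limit_sequentially])
  qed
  have gint: "integral\<^sup>N M (g p) = ennreal (sseq m a p - sseq m a n)" if "n \<le> p" for p
  proof -
    have "integral\<^sup>N M (g p) = ennreal (expectation (\<lambda>\<omega>. (cmod (Z [] p \<omega> - Z [] n \<omega>))\<^sup>2))"
      unfolding g_def
      by (subst nn_integral_eq_integral[symmetric]) (auto intro!: nn_integral_cong sq_int simp: norm_minus_commute)
    then show ?thesis using E_sq_diff[OF that] by simp
  qed
  have "(\<integral>\<^sup>+\<omega>. ennreal ((cmod (Z [] n \<omega> - Yinf \<omega>))\<^sup>2) \<partial>M) = (\<integral>\<^sup>+\<omega>. liminf (\<lambda>p. g p \<omega>) \<partial>M)"
    by (rule nn_integral_cong_AE) (use ae in \<open>auto elim!: eventually_mono\<close>)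
  also have "\<dots> \<le> liminf (\<lambda>p. integral\<^sup>N M (g p))"
    by (rule nn_integral_liminf[OF gm])
  also have "\<dots> = liminf (\<lambda>p. ennreal (sseq m a p - sseq m a n))"
    by (rule Liminf_eq) (use gint in \<open>auto simp: eventually_sequentially\<close>)
  also have "\<dots> = ennreal (L - sseq m a n)"
    by (rule lim_imp_Liminf[OF trivial_limit_sequentially]) (intro tendsto_intros sseq_L)
  finally have le: "(\<integral>\<^sup>+\<omega>. ennreal ((cmod (Z [] n \<omega> - Yinf \<omega>))\<^sup>2) \<partial>M) \<le> ennreal (L - sseq m a n)" .
  show int: "integrable M (\<lambda>\<omega>. (cmod (Z [] n \<omega> - Yinf \<omega>))\<^sup>2)"
    by (rule integrableI_nonneg) (use le Z_meas[of "[]" n] in \<open>auto intro: le_less_trans\<close>)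
  have "ennreal (expectation (\<lambda>\<omega>. (cmod (Z [] n \<omega> - Yinf \<omega>))\<^sup>2)) \<le> ennreal (L - sseq m a n)"
    using le by (subst nn_integral_eq_integral[OF int, symmetric]) auto
  then show "expectation (\<lambda>\<omega>. (cmod (Z [] n \<omega> - Yinf \<omega>))\<^sup>2) \<le> L - sseq m a n"
    using sseq_le_L[of n] by (simp add: ennreal_le_iff)
qed

lemma L2_conv: "(\<lambda>n. expectation (\<lambda>\<omega>. (cmod (Z [] n \<omega> - Yinf \<omega>))\<^sup>2)) \<longlonglongrightarrow> 0"
proof (rule real_tendsto_sandwich[where f="\<lambda>_. 0" and h="\<lambda>n. L - sseq m a n"])
  show "\<forall>\<^sub>F n in sequentially. 0 \<le> expectation (\<lambda>\<omega>. (cmod (Z [] n \<omega> - Yinf \<omega>))\<^sup>2)"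
    by (intro always_eventually allI integral_nonneg_AE) simp
  show "\<forall>\<^sub>F n in sequentially. expectation (\<lambda>\<omega>. (cmod (Z [] n \<omega> - Yinf \<omega>))\<^sup>2) \<le> L - sseq m a n"
    using L2_bound(2) by simp
  have "(\<lambda>n. L - sseq m a n) \<longlonglongrightarrow> L - L" by (intro tendsto_intros sseq_L)
  then show "(\<lambda>n. L - sseq m a n) \<longlonglongrightarrow> 0" by simp
qed simp

end

context tree2 begin

lemma Yinf_sq_int: "integrable M (\<lambda>\<omega>. (cmod (Yinf \<omega>))\<^sup>2)"
proof (rule Bochner_Integration.integrable_bound)
  show "integrable M (\<lambda>\<omega>. 2 * (cmod (Z [] 0 \<omega> - Yinf \<omega>))\<^sup>2 + 2)"
    using L2_bound(1)[of 0] by (intro Bochner_Integration.integrable_add integrable_mult_right) auto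
  show "(\<lambda>\<omega>. (cmod (Yinf \<omega>))\<^sup>2) \<in> borel_measurable M" by measurable
  show "AE \<omega> in M. norm ((cmod (Yinf \<omega>))\<^sup>2) \<le> norm (2 * (cmod (Z [] 0 \<omega> - Yinf \<omega>))\<^sup>2 + 2)"
    using cmod_sq_bound by (intro AE_I2) simp
qed

lemma Yinf_int: "integrable M Yinf"
  using L1L2(1)[OF Yinf_meas Yinf_sq_int] .

lemma E_Yinf: "expectation Yinf = 1"
proof -
  have le: "(cmod (1 - expectation Yinf))^2 \<le> expectation (\<lambda>\<omega>. (cmod (Z [] n \<omega> - Yinf \<omega>))\<^sup>2)" for n
  proof -
    have "expectation (\<lambda>\<omega>. Z [] n \<omega> - Yinf \<omega>) = 1 - expectation Yinf"
      using Z_int[of "[]" n] Yinf_int EZ[of "[]" n] by simp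
    moreover have "(cmod (expectation (\<lambda>\<omega>. Z [] n \<omega> - Yinf \<omega>)))^2 \<le> expectation (\<lambda>\<omega>. (cmod (Z [] n \<omega> - Yinf \<omega>))\<^sup>2)"
      by (rule L1L2(2)) (use L2_bound(1) Z_meas[of "[]" n] in auto)
    ultimately show ?thesis by simp
  qed
  have "(cmod (1 - expectation Yinf))^2 \<le> 0"
    by (rule LIMSEQ_le_const[OF L2_conv]) (use le in auto)
  then show ?thesis by simp
qed

lemma Var_Yinf: "expectation (\<lambda>\<omega>. (cmod (Yinf \<omega> - 1))\<^sup>2) = L - 1"
proof -
  define V where "V = expectation (\<lambda>\<omega>. (cmod (Yinf \<omega> - 1))\<^sup>2)"
  define e where "e n = expectation (\<lambda>\<omega>. (cmod (Z [] n \<omega> - Yinf \<omega>))\<^sup>2)" for n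
  have e0: "0 \<le> e n" for n unfolding e_def by (intro integral_nonneg_AE) simp
  have Vint: "integrable M (\<lambda>\<omega>. (cmod (Yinf \<omega> - 1))\<^sup>2)"
    using L2_bound(1)[of 0] by (simp add: norm_minus_commute)
  have D: "\<bar>V - e n - (sseq m a n - 1)\<bar> \<le> 2 * sqrt (e n * (L - 1))" for n
  proof -
    define U where "U \<omega> = cmod (Z [] n \<omega> - Yinf \<omega>)" for \<omega>
    define W where "W \<omega> = cmod (Z [] n \<omega> - 1)" for \<omega>
    have Um: "U \<in> borel_measurable M" unfolding U_def using Z_meas[of "[]" n] by measurable
    have Wm: "W \<in> borel_measurable M" unfolding W_def using Z_meas[of "[]" n] by measurable
    have Ui: "integrable M (\<lambda>\<omega>. (U \<omega>)^2)" unfolding U_def by (rule L2_bound(1))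
    have Wi: "integrable M (\<lambda>\<omega>. (W \<omega>)^2)" unfolding W_def using sq_int[of n 0] by simp
    have WE: "expectation (\<lambda>\<omega>. (W \<omega>)^2) = sseq m a n - 1"
      unfolding W_def using E_sq_diff[of 0 n] by simp
    note cs = CS[OF Um Wm Ui Wi]
    have UW0: "0 \<le> expectation (\<lambda>\<omega>. U \<omega> * W \<omega>)"
      by (intro integral_nonneg_AE) (simp add: U_def W_def)
    have "(expectation (\<lambda>\<omega>. U \<omega> * W \<omega>))^2 \<le> e n * (sseq m a n - 1)"
      using cs(2) WE unfolding e_def U_def by simp
    also have "\<dots> \<le> e n * (L - 1)"
      using sseq_le_L[of n] e0[of n] by (intro mult_left_mono) auto
    finally have UWle: "expectation (\<lambda>\<omega>. U \<omega> * W \<omega>) \<le> sqrt (e n * (L - 1))"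
      by (rule real_le_rsqrt)
    have hb: "\<bar>(cmod (Yinf \<omega> - 1))\<^sup>2 - (U \<omega>)^2 - (W \<omega>)^2\<bar> \<le> 2 * (U \<omega> * W \<omega>)" for \<omega>
      using cross_bound[of "Yinf \<omega> - Z [] n \<omega>" "Z [] n \<omega> - 1"]
      unfolding U_def W_def by (simp add: norm_minus_commute)
    have "V - e n - (sseq m a n - 1) = expectation (\<lambda>\<omega>. (cmod (Yinf \<omega> - 1))\<^sup>2 - (U \<omega>)^2 - (W \<omega>)^2)"
      unfolding V_def e_def WE[symmetric] using Vint Ui Wi by (simp add: U_def)
    also have "\<bar>\<dots>\<bar> \<le> expectation (\<lambda>\<omega>. 2 * (U \<omega> * W \<omega>))"
    proof -
      have "\<bar>expectation (\<lambda>\<omega>. (cmod (Yinf \<omega> - 1))\<^sup>2 - (U \<omega>)^2 - (W \<omega>)^2)\<bar>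
           \<le> expectation (\<lambda>\<omega>. \<bar>(cmod (Yinf \<omega> - 1))\<^sup>2 - (U \<omega>)^2 - (W \<omega>)^2\<bar>)"
        using integral_norm_bound[of M "\<lambda>\<omega>. (cmod (Yinf \<omega> - 1))\<^sup>2 - (U \<omega>)^2 - (W \<omega>)^2"] by simp
      also have "\<dots> \<le> expectation (\<lambda>\<omega>. 2 * (U \<omega> * W \<omega>))"
        by (rule integral_mono) (use Vint Ui Wi cs(1) hb in auto)
      finally show ?thesis .
    qed
    also have "\<dots> \<le> 2 * sqrt (e n * (L - 1))" using UWle by simp
    finally show ?thesis .
  qed
  have sq0: "(\<lambda>n. 2 * sqrt (e n * (L - 1))) \<longlonglongrightarrow> 2 * sqrt (0 * (L - 1))"
    by (intro tendsto_intros) (use L2_conv in \<open>simp add: e_def\<close>)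
  have Dconv: "(\<lambda>n. V - e n - (sseq m a n - 1)) \<longlonglongrightarrow> 0"
  proof (rule real_tendsto_sandwich[where f="\<lambda>n. - (2 * sqrt (e n * (L - 1)))" and h="\<lambda>n. 2 * sqrt (e n * (L - 1))"])
    show "\<forall>\<^sub>F n in sequentially. - (2 * sqrt (e n * (L - 1))) \<le> V - e n - (sseq m a n - 1)"
      using D by (intro always_eventually allI) (smt (verit))
    show "\<forall>\<^sub>F n in sequentially. V - e n - (sseq m a n - 1) \<le> 2 * sqrt (e n * (L - 1))"
      using D by (intro always_eventually allI) (smt (verit))
    show "(\<lambda>n. - (2 * sqrt (e n * (L - 1)))) \<longlonglongrightarrow> 0" using tendsto_minus[OF sq0] by simp
    show "(\<lambda>n. 2 * sqrt (e n * (L - 1))) \<longlonglongrightarrow> 0" using sq0 by simp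
  qed
  have "(\<lambda>n. (V - e n - (sseq m a n - 1)) + e n + (sseq m a n - 1)) \<longlonglongrightarrow> 0 + 0 + (L - 1)"
    by (intro tendsto_intros Dconv sseq_L) (use L2_conv in \<open>simp add: e_def\<close>)
  then have "(\<lambda>n. V) \<longlonglongrightarrow> L - 1" by simp
  then have "V = L - 1" by (rule LIMSEQ_unique[OF tendsto_const])
  then show ?thesis unfolding V_def .
qed

end

lemma deriv_aux: "(w::complex) \<noteq> 0 \<Longrightarrow> 0 * E + E * (0 * y + 1 * - w) * - (c / w) = c * E"
  by (simp add: field_simps)

lemma exp_integral:
  fixes z :: complex and l :: real
  assumes l: "0 < l" and z: "0 \<le> Re z"
  shows "set_integrable lborel {0<..} (\<lambda>x. of_real l * exp (-(of_real l + z) * of_real x))"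
    and "(LBINT x=0..\<infinity>. of_real l * exp (-(of_real l + z) * of_real x)) = of_real l / (of_real l + z)"
proof -
  have nz: "of_real l + z \<noteq> 0"
  proof
    assume "of_real l + z = 0"
    then have "Re (of_real l + z) = 0" by simp
    then show False using l z by simp
  qed
  define f where "f x = of_real l * exp (-(of_real l + z) * of_real x)" for x :: real
  have fm: "f \<in> borel_measurable lborel"
    unfolding f_def measurable_lborel2 by (intro borel_measurable_continuous_onI continuous_intros)
  show si: "set_integrable lborel {0<..} (\<lambda>x. of_real l * exp (-(of_real l + z) * of_real x))"
    unfolding set_integrable_def
  proof (rule Bochner_Integration.integrable_bound)
    show "integrable lborel (\<lambda>x. l * (indicator {0<..} x *\<^sub>R exp (-(x * l))))"
      using integrable_I0i_exp_mscale[OF l] unfolding set_integrable_def by (rule integrable_mult_right)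
    show "(\<lambda>x. indicator {0<..} x *\<^sub>R (of_real l * exp (-(of_real l + z) * of_real x))) \<in> borel_measurable lborel"
      using fm unfolding f_def by measurable
    show "AE x in lborel. norm (indicator {0<..} x *\<^sub>R (of_real l * exp (-(of_real l + z) * complex_of_real x)))
          \<le> norm (l * (indicator {0<..} x *\<^sub>R exp (-(x * l))))"
    proof (intro AE_I2)
      fix x :: real
      show "norm (indicator {0<..} x *\<^sub>R (of_real l * exp (-(of_real l + z) * complex_of_real x)))
          \<le> norm (l * (indicator {0<..} x *\<^sub>R exp (-(x * l))))"
      proof (cases "0 < x")
        case True
        have "Re (-(of_real l + z) * complex_of_real x) \<le> -(x * l)"
          using True z by (simp add: algebra_simps mult_nonneg_nonneg)
        then have "exp (Re (-(of_real l + z) * complex_of_real x)) \<le> exp (-(x * l))" by simp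
        then show ?thesis using True l by (simp add: norm_mult)
      qed simp
    qed
  qed
  show "(LBINT x=0..\<infinity>. of_real l * exp (-(of_real l + z) * of_real x)) = of_real l / (of_real l + z)"
  proof -
    define G where "G w = - (of_real l / (of_real l + z)) * exp (-(of_real l + z) * w)" for w :: complex
    have "(LBINT x=0..\<infinity>. f x) = 0 - G (of_real 0)"
    proof (rule interval_integral_FTC_integrable[where F="\<lambda>x. G (of_real x)"])
      show "(0::ereal) < \<infinity>" by simp
      fix x :: real
      show "((\<lambda>x. G (complex_of_real x)) has_vector_derivative f x) (at x)"
        unfolding f_def
      proof (rule has_vector_derivative_real_field)
        have e: "0 * exp (- (complex_of_real l + z) * complex_of_real x) +
            exp (- (complex_of_real l + z) * complex_of_real x) *
            (0 * complex_of_real x + 1 * - (complex_of_real l + z)) *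
            - (complex_of_real l / (complex_of_real l + z))
              = of_real l * exp (-(of_real l + z) * of_real x)"
          by (rule deriv_aux[OF nz])
        show "(G has_field_derivative (of_real l * exp (-(of_real l + z) * of_real x))) (at (of_real x))"
          unfolding G_def
          by (rule derivative_eq_intros refl | rule e)+
      qed
      show "isCont f x" unfolding f_def by (intro continuous_intros)
    next
      have "einterval 0 \<infinity> = {0::real<..}" by (auto simp: einterval_iff zero_ereal_def)
      then show "set_integrable lborel (einterval 0 \<infinity>) f" using si unfolding f_def by simp
      show "(((\<lambda>x. G (complex_of_real x)) \<circ> real_of_ereal) \<longlongrightarrow> G (of_real 0)) (at_right 0)"
        using nz by (auto simp: zero_ereal_def ereal_tendsto_simps G_def intro!: tendsto_eq_intros)
      have *: "((\<lambda>t. exp (- t * (l + Re z))) \<longlongrightarrow> 0) at_top"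
        using l z
        by (auto intro!: exp_at_bot[THEN filterlim_compose] filterlim_tendsto_pos_mult_at_top filterlim_ident
             simp: filterlim_uminus_at_bot mult.commute[of _ "l + Re z"])
      have "((\<lambda>x. G (complex_of_real x)) \<longlongrightarrow> 0) at_top"
      proof (rule tendsto_norm_zero_cancel)
        have "((\<lambda>t. cmod (of_real l / (of_real l + z)) * exp (- t * (l + Re z))) \<longlongrightarrow> cmod (of_real l / (of_real l + z)) * 0) at_top"
          by (intro tendsto_intros *)
        moreover have eq: "norm (G (of_real t)) = cmod (of_real l / (of_real l + z)) * exp (- t * (l + Re z))" for t
          unfolding G_def norm_mult norm_minus_cancel norm_exp_eq_Re by (simp add: algebra_simps)
        ultimately show "((\<lambda>x. norm (G (complex_of_real x))) \<longlongrightarrow> 0) at_top"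
          by (simp only: eq) simp
      qed
      then show "(((\<lambda>x. G (complex_of_real x)) \<circ> real_of_ereal) \<longlongrightarrow> 0) (at_left \<infinity>)"
        unfolding ereal_tendsto_simps .
    qed
    then show ?thesis using nz by (simp add: f_def G_def)
  qed
qed

lemma exp_pt: "0 < (x::real) \<Longrightarrow> exponential_density l x *\<^sub>R exp (- z * complex_of_real x)
   = of_real l * exp (-(of_real l + z) * of_real x)"
proof -
  assume x: "0 < x"
  have e1: "complex_of_real (exp (- x * l)) = exp (complex_of_real (- x * l))" by (simp only: exp_of_real)
  have "exponential_density l x *\<^sub>R exp (- z * complex_of_real x)
     = of_real l * (complex_of_real (exp (- x * l)) * exp (- z * complex_of_real x))"
    using x by (simp add: exponential_density_def scaleR_conv_of_real)
  also have "complex_of_real (exp (- x * l)) * exp (- z * complex_of_real x) = exp (complex_of_real (- x * l) + - z * complex_of_real x)"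
    by (simp only: e1 mult_exp_exp)
  also have "complex_of_real (- x * l) + - z * complex_of_real x = -(of_real l + z) * of_real x"
    by (simp add: algebra_simps)
  finally show ?thesis .
qed

lemma (in prob_space) exp_moment:
  fixes X :: "'a \<Rightarrow> real" and l :: real and z :: complex
  assumes D: "distributed M lborel X (exponential_density l)" and l: "0 < l" and z: "0 \<le> Re z"
  shows "integrable M (\<lambda>\<omega>. exp (- z * of_real (X \<omega>)))"
    and "expectation (\<lambda>\<omega>. exp (- z * of_real (X \<omega>))) = of_real l / (of_real l + z)"
proof -
  have Xm[measurable]: "X \<in> measurable M lborel" using D by (rule distributed_measurable)
  have dd: "distr M lborel X = density lborel (\<lambda>x. ennreal (exponential_density l x))"
    using D by (rule distributed_distr_eq_density)
  define g where "g x = exp (- z * complex_of_real x)" for x :: real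
  define h where "h x = indicator {0<..} x *\<^sub>R (of_real l * exp (-(of_real l + z) * of_real x))" for x :: real
  have gm[measurable]: "g \<in> borel_measurable lborel"
    unfolding g_def measurable_lborel2 by (intro borel_measurable_continuous_onI continuous_intros)
  have em[measurable]: "exponential_density l \<in> borel_measurable lborel"
    by simp
  have nn: "AE x in lborel. 0 \<le> exponential_density l x"
    using exponential_density_nonneg[OF l] by simp
  have ae: "AE x in lborel. exponential_density l x *\<^sub>R g x = h x"
    using AE_lborel_singleton[of 0]
  proof eventually_elim
    case (elim x)
    show ?case
    proof (cases "0 < x")
      case True
      show ?thesis unfolding h_def g_def by (subst exp_pt[OF True]) (simp add: True)
    qed (use elim in \<open>auto simp: h_def exponential_density_def\<close>)
  qed
  have hi: "integrable lborel h"
    using exp_integral(1)[OF l z] unfolding set_integrable_def h_def .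
  have hI: "integral\<^sup>L lborel h = of_real l / (of_real l + z)"
    using exp_integral(2)[OF l z] unfolding interval_lebesgue_integral_0_infty set_lebesgue_integral_def h_def .
  have i1: "integrable lborel (\<lambda>x. exponential_density l x *\<^sub>R g x)"
    using integrable_cong_AE[OF _ _ ae] hi by (simp)
  have "integrable (distr M lborel X) g"
    unfolding dd by (subst integrable_density) (use nn i1 in auto)
  then show "integrable M (\<lambda>\<omega>. exp (- z * of_real (X \<omega>)))"
    using integrable_distr_eq[OF Xm gm] by (simp add: g_def)
  have "expectation (\<lambda>\<omega>. exp (- z * of_real (X \<omega>))) = integral\<^sup>L (distr M lborel X) g"
    using integral_distr[OF Xm gm] by (simp add: g_def)
  also have "\<dots> = integral\<^sup>L lborel (\<lambda>x. exponential_density l x *\<^sub>R g x)"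
    unfolding dd by (subst integral_density) (use nn in auto)
  also have "\<dots> = integral\<^sup>L lborel h"
    by (rule integral_cong_AE) (use ae borel_measurable_integrable[OF hi] in auto)
  finally show "expectation (\<lambda>\<omega>. exp (- z * of_real (X \<omega>))) = of_real l / (of_real l + z)"
    using hI by simp
qed

lemma prod_shift1: "(\<Prod>j\<in>{1..n}. real j + 1) = fact (Suc n)"
  by (induction n) (simp_all add: atLeastAtMostSuc_conv algebra_simps)

lemma (in prob_space) exp_nonneg_AE:
  assumes D: "distributed M lborel X (exponential_density l)"
  shows "AE \<omega> in M. 0 \<le> X \<omega>"
proof (rule AE_I[where N="X -` {..<0} \<inter> space M"])
  show "{\<omega> \<in> space M. \<not> 0 \<le> X \<omega>} \<subseteq> X -` {..<0} \<inter> space M" by auto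
  have Xm: "X \<in> measurable M lborel" using D by (rule distributed_measurable)
  show "X -` {..<0} \<inter> space M \<in> sets M"
    using Xm by (intro measurable_sets[OF Xm]) simp
  have "emeasure M (X -` {..<0} \<inter> space M) = (\<integral>\<^sup>+x. ennreal (exponential_density l x) * indicator {..<0} x \<partial>lborel)"
    by (rule distributed_emeasure[OF D]) simp
  also have "\<dots> = 0"
    by (rule nn_integral_zero'[OF AE_I2]) (auto simp: exponential_density_def indicator_def)
  finally show "emeasure M (X -` {..<0} \<inter> space M) = 0" .
qed

lemma (in prob_space) sum_moment:
  fixes tau :: "nat \<Rightarrow> 'a \<Rightarrow> real" and z :: complex
  assumes indep: "indep_vars (\<lambda>_. borel) tau J" and fin: "finite J" and J0: "0 \<notin> J"
    and D: "\<forall>j\<in>J. distributed M lborel (tau j) (exponential_density (real j))" and z: "0 \<le> Re z"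
  shows "expectation (\<lambda>\<omega>. exp (- z * of_real (\<Sum>j\<in>J. tau j \<omega>))) = (\<Prod>j\<in>J. of_nat j / (of_nat j + z))"
proof -
  have pos: "\<And>j. j \<in> J \<Longrightarrow> 0 < real j" using J0 by (metis of_nat_0_less_iff gr0I)
  have eq: "exp (- z * of_real (\<Sum>j\<in>J. tau j \<omega>)) = (\<Prod>j\<in>J. exp (- z * of_real (tau j \<omega>)))" for \<omega>
    using fin by (simp add: sum_distrib_left exp_sum)
  have Ym: "(\<lambda>x. exp (- z * complex_of_real x)) \<in> borel_measurable borel"
    by (intro borel_measurable_continuous_onI continuous_intros)
  have ind: "indep_vars (\<lambda>_. borel) (\<lambda>j \<omega>. exp (- z * complex_of_real (tau j \<omega>))) J"
    by (rule indep_vars_compose2[OF indep Ym])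
  have "expectation (\<lambda>\<omega>. exp (- z * of_real (\<Sum>j\<in>J. tau j \<omega>))) = expectation (\<lambda>\<omega>. \<Prod>j\<in>J. exp (- z * of_real (tau j \<omega>)))"
    by (simp only: eq)
  also have "\<dots> = (\<Prod>j\<in>J. expectation (\<lambda>\<omega>. exp (- z * of_real (tau j \<omega>))))"
    by (rule indep_vars_lebesgue_integral[OF fin ind]) (use exp_moment(1) D pos z in blast)
  also have "\<dots> = (\<Prod>j\<in>J. of_nat j / (of_nat j + z))"
    by (intro prod.cong refl) (use exp_moment(2) D pos z in auto)
  finally show ?thesis .
qed

lemma (in prob_space) A_facts:
  fixes m :: nat and lam :: complex and tau :: "nat \<Rightarrow> 'a \<Rightarrow> real" and A :: "'a \<Rightarrow> complex"
  assumes m2: "m \<ge> 2"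
    and root: "(\<Prod>k=1..m-1. lam + of_nat k) - of_nat (fact m) = 0"
    and re: "Re lam > 1/2"
    and tau_indep: "indep_vars (\<lambda>_. borel) tau {1..m-1}"
    and tau_exp: "\<forall>j\<in>{1..m-1}. distributed M lborel (tau j) (exponential_density (real j))"
    and A_def: "A = (\<lambda>\<omega>. exp (- lam * of_real (\<Sum>j=1..m-1. tau j \<omega>)))"
  shows "A \<in> borel_measurable M" "AE \<omega> in M. cmod (A \<omega>) \<le> 1" "expectation A = 1 / of_nat m"
    "real m * expectation (\<lambda>\<omega>. (cmod (A \<omega>))\<^sup>2) < 1"
proof -
  define J where "J = {1..m-1}"
  define T where "T \<omega> = (\<Sum>j\<in>J. tau j \<omega>)" for \<omega>
  have fin: "finite J" and J0: "0 \<notin> J" unfolding J_def by auto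
  have taum: "\<And>j. j \<in> J \<Longrightarrow> tau j \<in> borel_measurable M"
    using tau_indep unfolding J_def indep_vars_def by auto
  have Tm: "T \<in> borel_measurable M" unfolding T_def by (intro borel_measurable_sum taum)
  have Aeq: "A = (\<lambda>\<omega>. exp (- lam * of_real (T \<omega>)))" unfolding A_def T_def J_def ..
  have cm: "(\<lambda>t. exp (- lam * complex_of_real t)) \<in> borel_measurable borel"
    by (intro borel_measurable_continuous_onI continuous_intros)
  show Am: "A \<in> borel_measurable M" unfolding Aeq by (rule measurable_compose[OF Tm cm])
  have "AE \<omega> in M. \<forall>j\<in>J. 0 \<le> tau j \<omega>"
  proof (rule AE_finite_allI[OF fin])
    fix j assume "j \<in> J"
    then have "distributed M lborel (tau j) (exponential_density (real j))"
      using tau_exp unfolding J_def by blast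
    then show "AE \<omega> in M. 0 \<le> tau j \<omega>" by (rule exp_nonneg_AE)
  qed
  then have T0: "AE \<omega> in M. 0 \<le> T \<omega>"
    by eventually_elim (auto simp: T_def intro: sum_nonneg)
  show "AE \<omega> in M. cmod (A \<omega>) \<le> 1"
    using T0
  proof eventually_elim
    case (elim \<omega>)
    have "Re (- lam * complex_of_real (T \<omega>)) \<le> 0" using elim re by simp
    then show ?case unfolding Aeq by simp
  qed
  have pos: "0 < Re lam" using re by simp
  have "expectation A = (\<Prod>j\<in>J. of_nat j / (of_nat j + lam))"
    unfolding A_def J_def by (rule sum_moment[OF tau_indep]) (use tau_exp pos in auto)
  also have "\<dots> = (\<Prod>j\<in>J. of_nat j) / (\<Prod>j\<in>J. lam + of_nat j)"
    by (simp add: prod_dividef add.commute)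
  also have "(\<Prod>j\<in>J. lam + of_nat j) = of_nat (fact m)" using root unfolding J_def by simp
  also have "(\<Prod>j\<in>J. (of_nat j :: complex)) = of_nat (fact (m-1))"
    unfolding J_def fact_prod by simp
  also have "(of_nat (fact (m - 1)) :: complex) / of_nat (fact m) = 1 / of_nat m"
  proof -
    have "(fact m :: complex) = of_nat m * fact (m - 1)" by (rule fact_reduce) (use m2 in simp)
    then show ?thesis using m2 by (simp add: field_simps)
  qed
  finally show "expectation A = 1 / of_nat m" .
  define s where "s = 2 * Re lam"
  have s1: "1 < s" using re unfolding s_def by simp
  have sq: "complex_of_real ((cmod (A \<omega>))\<^sup>2) = exp (- complex_of_real s * complex_of_real (T \<omega>))" for \<omega>
  proof -
    have "(cmod (A \<omega>))\<^sup>2 = exp (- s * T \<omega>)"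
      unfolding Aeq s_def by (simp add: exp_double[symmetric] power2_eq_square exp_add[symmetric] algebra_simps)
    then show ?thesis by (simp add: exp_of_real[symmetric])
  qed
  have "complex_of_real (expectation (\<lambda>\<omega>. (cmod (A \<omega>))\<^sup>2)) = expectation (\<lambda>\<omega>. complex_of_real ((cmod (A \<omega>))\<^sup>2))"
    by (rule integral_complex_of_real[symmetric])
  also have "\<dots> = expectation (\<lambda>\<omega>. exp (- complex_of_real s * complex_of_real (\<Sum>j\<in>J. tau j \<omega>)))"
    unfolding sq T_def ..
  also have "\<dots> = (\<Prod>j\<in>J. of_nat j / (of_nat j + complex_of_real s))"
    unfolding J_def by (rule sum_moment[OF tau_indep]) (use tau_exp s1 in auto)
  also have "\<dots> = complex_of_real (\<Prod>j\<in>J. real j / (real j + s))"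
    by simp
  finally have aeq: "expectation (\<lambda>\<omega>. (cmod (A \<omega>))\<^sup>2) = (\<Prod>j\<in>J. real j / (real j + s))"
    by (simp only: of_real_eq_iff)
  have "(\<Prod>j\<in>J. real j / (real j + s)) = (\<Prod>j\<in>J. real j) / (\<Prod>j\<in>J. real j + s)"
    by (simp add: prod_dividef)
  also have "(\<Prod>j\<in>J. real j) = fact (m - 1)" unfolding J_def fact_prod by simp
  also have "fact (m - 1) / (\<Prod>j\<in>J. real j + s) < fact (m - 1) / (\<Prod>j\<in>J. real j + 1)"
  proof (rule divide_strict_left_mono)
    show "(\<Prod>j\<in>J. real j + 1) < (\<Prod>j\<in>J. real j + s)"
      by (rule prod_mono_strict[of 1]) (use s1 m2 fin in \<open>auto simp: J_def\<close>)
    show "0 < (fact (m - 1) :: real)" by simp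
    show "0 < (\<Prod>j\<in>J. real j + s) * (\<Prod>j\<in>J. real j + 1)"
      using s1 by (intro mult_pos_pos prod_pos) auto
  qed
  also have "(\<Prod>j\<in>J. real j + 1) = fact m"
    using prod_shift1[of "m-1"] m2 unfolding J_def by simp
  also have "(fact (m - 1) :: real) / fact m = 1 / real m"
  proof -
    have "(fact m :: real) = of_nat m * fact (m - 1)" by (rule fact_reduce) (use m2 in simp)
    then show ?thesis using m2 by (simp add: field_simps)
  qed
  finally have "expectation (\<lambda>\<omega>. (cmod (A \<omega>))\<^sup>2) < 1 / real m" using aeq by simp
  then show "real m * expectation (\<lambda>\<omega>. (cmod (A \<omega>))\<^sup>2) < 1"
    using m2 by (simp add: field_simps)
qed

lemma (in prob_space) indep_sets_reindex:
  assumes inj: "inj_on f J" and ind: "indep_sets F (f ` J)"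
  shows "indep_sets (\<lambda>j. F (f j)) J"
  unfolding indep_sets_def
proof (intro conjI ballI allI impI)
  fix j assume "j \<in> J" then show "F (f j) \<subseteq> events" using ind unfolding indep_sets_def by auto
next
  fix K A assume K: "K \<subseteq> J" "K \<noteq> {}" "finite K" and A: "A \<in> Pi K (\<lambda>j. F (f j))"
  define A' where "A' i = A (the_inv_into K f i)" for i
  have inj': "inj_on f K" using inj K(1) by (rule inj_on_subset)
  have A'f: "\<And>j. j \<in> K \<Longrightarrow> A' (f j) = A j" using the_inv_into_f_f[OF inj'] by (simp add: A'_def)
  have "(\<Inter>j\<in>K. A j) = (\<Inter>i\<in>f`K. A' i)" using A'f by auto
  then have "prob (\<Inter>j\<in>K. A j) = prob (\<Inter>i\<in>f`K. A' i)" by simp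
  also have "\<dots> = (\<Prod>i\<in>f`K. prob (A' i))"
  proof -
    have H: "\<forall>Ja\<subseteq>f ` J. Ja \<noteq> {} \<longrightarrow> finite Ja \<longrightarrow> (\<forall>A\<in>Pi Ja F. prob (\<Inter> (A ` Ja)) = (\<Prod>j\<in>Ja. prob (A j)))"
      using ind unfolding indep_sets_def by (elim conjE)
    have sub: "f ` K \<subseteq> f ` J" using K by auto
    have ne: "f ` K \<noteq> {}" using K by auto
    have fi: "finite (f ` K)" using K by auto
    have Api: "A' \<in> Pi (f`K) F" using A A'f by auto
    show ?thesis using H[rule_format, OF sub ne fi Api] .
  qed
  also have "\<dots> = (\<Prod>j\<in>K. prob (A' (f j)))" by (rule prod.reindex[OF inj', unfolded comp_def])
  also have "\<dots> = (\<Prod>j\<in>K. prob (A j))" using A'f by simp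
  finally show "prob (\<Inter>j\<in>K. A j) = (\<Prod>j\<in>K. prob (A j))" .
qed

lemma (in prob_space) indep_vars_reindex':
  assumes inj: "inj_on f J" and ind: "indep_vars M' X (f ` J)"
  shows "indep_vars (\<lambda>j. M' (f j)) (\<lambda>j. X (f j)) J"
  using ind indep_sets_reindex[OF inj, of "\<lambda>i. {X i -` A \<inter> space M |A. A \<in> sets (M' i)}"]
  unfolding indep_vars_def2 by auto

lemma Yseq_Zg: "Yseq m A Au n \<omega> = Zg m (\<lambda>u. (if u = [] then A else Au u) \<omega>) n"
proof (cases n)
  case 0 then show ?thesis by (simp add: Yseq_def Zg_def)
next
  case (Suc n')
  have "Yseq m A Au n \<omega> = (\<Sum>w\<in>words m n'. of_nat m * A \<omega> * (\<Prod>k<n'. Au (take (Suc k) w) \<omega>))"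
    unfolding Yseq_def using Suc by (simp add: prod.atLeast1_atMost_eq)
  also have "\<dots> = (\<Sum>w\<in>words m n'. of_nat m * (\<Prod>k<Suc n'. (if take k w = [] then A else Au (take k w)) \<omega>))"
  proof (intro sum.cong refl)
    fix w assume w: "w \<in> words m n'"
    have "(\<Prod>k<Suc n'. (if take k w = [] then A else Au (take k w)) \<omega>)
        = (if take 0 w = [] then A else Au (take 0 w)) \<omega> * (\<Prod>k<n'. (if take (Suc k) w = [] then A else Au (take (Suc k) w)) \<omega>)"
      by (rule prod.lessThan_Suc_shift)
    also have "(\<Prod>k<n'. (if take (Suc k) w = [] then A else Au (take (Suc k) w)) \<omega>) = (\<Prod>k<n'. Au (take (Suc k) w) \<omega>)"
    proof (intro prod.cong refl)
      fix k assume "k \<in> {..<n'}"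
      then have "take (Suc k) w \<noteq> []" using w by (auto simp: words_def)
      then show "(if take (Suc k) w = [] then A else Au (take (Suc k) w)) \<omega> = Au (take (Suc k) w) \<omega>" by simp
    qed
    finally show "of_nat m * A \<omega> * (\<Prod>k<n'. Au (take (Suc k) w) \<omega>) = of_nat m * (\<Prod>k<Suc n'. (if take k w = [] then A else Au (take k w)) \<omega>)"
      by simp
  qed
  also have "\<dots> = Zg m (\<lambda>u. (if u = [] then A else Au u) \<omega>) n"
    unfolding Zg_def using Suc by simp
  finally show ?thesis .
qed

theorem lemma8p1:
  fixes M :: "'a measure" and m :: nat and lam :: complex
    and tau :: "nat \<Rightarrow> 'a \<Rightarrow> real"
    and A :: "'a \<Rightarrow> complex" and Au :: "nat list \<Rightarrow> 'a \<Rightarrow> complex"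
  assumes P: "prob_space M"
    and m2: "m \<ge> 2"
    and root: "(\<Prod>k=1..m-1. lam + of_nat k) - of_nat (fact m) = 0"
    and re: "Re lam > 1/2"
    and tau_indep: "prob_space.indep_vars M (\<lambda>_. borel) tau {1..m-1}"
    and tau_exp: "\<forall>j\<in>{1..m-1}. distributed M lborel (tau j) (exponential_density (real j))"
    and A_def: "A = (\<lambda>\<omega>. exp (- lam * of_real (\<Sum>j=1..m-1. tau j \<omega>)))"
    and indep: "prob_space.indep_vars M (\<lambda>_. borel)
                  (\<lambda>i. case i of None \<Rightarrow> A | Some u \<Rightarrow> Au u) (insert None (Some ` Uwords m))"
    and copies: "\<forall>u\<in>Uwords m. distr M borel (Au u) = distr M borel A"
  shows "\<exists>Yinf :: 'a \<Rightarrow> complex.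
           Yinf \<in> borel_measurable M \<and>
           (AE \<omega> in M. (\<lambda>n. Yseq m A Au n \<omega>) \<longlonglongrightarrow> Yinf \<omega>) \<and>
           integrable M (\<lambda>\<omega>. (cmod (Yinf \<omega>))\<^sup>2) \<and>
           (\<forall>n. integrable M (\<lambda>\<omega>. (cmod (Yseq m A Au n \<omega> - Yinf \<omega>))\<^sup>2)) \<and>
           (\<lambda>n. \<integral>\<omega>. (cmod (Yseq m A Au n \<omega> - Yinf \<omega>))\<^sup>2 \<partial>M) \<longlonglongrightarrow> 0 \<and>
           (\<integral>\<omega>. (cmod (Yinf \<omega> - (\<integral>x. Yinf x \<partial>M)))\<^sup>2 \<partial>M)
             = ((real m)\<^sup>2 * (\<integral>\<omega>. (cmod (A \<omega>))\<^sup>2 \<partial>M) - 1)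
               / (1 - real m * (\<integral>\<omega>. (cmod (A \<omega>))\<^sup>2 \<partial>M))"
proof -
  interpret prob_space M by (rule P)
  note AF = A_facts[OF m2 root re tau_indep tau_exp A_def]
  define a where "a = expectation (\<lambda>\<omega>. (cmod (A \<omega>))\<^sup>2)"
  define B where "B u = (if u = [] then A else Au u)" for u
  define V where "V = {u::nat list. set u \<subseteq> {1..m}}"
  define f where "f u = (if u = [] then None else Some u)" for u :: "nat list"
  define X where "X i = (case i of None \<Rightarrow> A | Some u \<Rightarrow> Au u)" for i
  have injf: "inj_on f V" unfolding inj_on_def f_def by auto
  have fV: "f ` V = insert None (Some ` Uwords m)"
  proof
    show "f ` V \<subseteq> insert None (Some ` Uwords m)" by (auto simp: f_def V_def Uwords_def)
    show "insert None (Some ` Uwords m) \<subseteq> f ` V"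
    proof
      fix i assume "i \<in> insert None (Some ` Uwords m)"
      then show "i \<in> f ` V"
      proof
        assume "i = None" then show ?thesis by (intro image_eqI[of _ _ "[]"]) (auto simp: f_def V_def)
      next
        assume "i \<in> Some ` Uwords m"
        then obtain u where "u \<in> Uwords m" "i = Some u" by auto
        then show ?thesis by (intro image_eqI[of _ _ u]) (auto simp: f_def V_def Uwords_def)
      qed
    qed
  qed
  have ind0: "indep_vars (\<lambda>_. borel) X (f ` V)" using indep unfolding fV X_def .
  have indB: "indep_vars (\<lambda>_. borel) B V"
    using indep_vars_reindex'[OF injf ind0]
    by (rule indep_vars_cong[THEN iffD1, rotated 3]) (auto simp: X_def B_def f_def)
  have UW: "u \<in> Uwords m" if "u \<noteq> []" "set u \<subseteq> {1..m}" for u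
    using that by (simp add: Uwords_def)
  have Aum: "Au u \<in> borel_measurable M" if "u \<in> Uwords m" for u
  proof -
    have "Some u \<in> insert None (Some ` Uwords m)" using that by simp
    then show ?thesis using indep unfolding indep_vars_def by auto
  qed
  have Am: "A \<in> borel_measurable M" by (rule AF(1))
  have dist_int: "expectation (\<lambda>\<omega>. g (Au u \<omega>)) = expectation (\<lambda>\<omega>. g (A \<omega>))"
    if "u \<in> Uwords m" "g \<in> borel_measurable borel" for u and g :: "complex \<Rightarrow> 'b::{banach,second_countable_topology}"
  proof -
    have "expectation (\<lambda>\<omega>. g (Au u \<omega>)) = integral\<^sup>L (distr M borel (Au u)) g"
      by (rule integral_distr[symmetric]) (use that Aum in auto)
    also have "\<dots> = integral\<^sup>L (distr M borel A) g" using copies that by simp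
    also have "\<dots> = expectation (\<lambda>\<omega>. g (A \<omega>))"
      by (rule integral_distr) (use that Am in auto)
    finally show ?thesis .
  qed
  have bnd_u: "AE \<omega> in M. cmod (B u \<omega>) \<le> 1" if "u \<in> V" for u
  proof (cases "u = []")
    case True then show ?thesis using AF(2) by (simp add: B_def)
  next
    case False
    then have u: "u \<in> Uwords m" using that UW by (auto simp: V_def)
    have S: "{z \<in> space borel. cmod (z::complex) \<le> 1} \<in> sets borel" by measurable
    have "AE z in distr M borel A. cmod z \<le> 1"
      using AF(2) by (subst AE_distr_iff[OF Am S]) 
    moreover have deq: "distr M borel (Au u) = distr M borel A" using copies u by blast
    ultimately have "AE z in distr M borel (Au u). cmod z \<le> 1" by (simp only: deq)
    then have "AE \<omega> in M. cmod (Au u \<omega>) \<le> 1"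
      by (subst (asm) AE_distr_iff[OF Aum[OF u] S])
    then show ?thesis using False by (simp add: B_def)
  qed
  interpret T: tree2 M m B a
  proof (unfold_locales)
    show "1 \<le> m" using m2 by simp
    show "indep_vars (\<lambda>_. borel) B {u. set u \<subseteq> {1..m}}" using indB unfolding V_def .
    show "expectation (B u) = 1 / of_nat m" if "set u \<subseteq> {1..m}" for u
    proof (cases "u = []")
      case True then show ?thesis using AF(3) by (simp add: B_def)
    next
      case False
      then show ?thesis using dist_int[of u "\<lambda>z. z"] UW[OF False that] AF(3) by (simp add: B_def)
    qed
    show "expectation (\<lambda>\<omega>. (cmod (B u \<omega>))\<^sup>2) = a" if "set u \<subseteq> {1..m}" for u
    proof (cases "u = []")
      case True then show ?thesis by (simp add: B_def a_def)
    next
      case False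
      have gm: "(\<lambda>z::complex. (cmod z)\<^sup>2) \<in> borel_measurable borel" by measurable
      show ?thesis using dist_int[OF UW[OF False that] gm] False by (simp add: B_def a_def)
    qed
    show "AE \<omega> in M. \<forall>u\<in>{u. set u \<subseteq> {1..m}}. cmod (B u \<omega>) \<le> 1"
      by (subst AE_ball_countable) (use bnd_u in \<open>auto simp: V_def\<close>)
    show "real m * a < 1" using AF(4) unfolding a_def .
  qed
  have YZ: "Yseq m A Au n \<omega> = T.Z [] n \<omega>" for n \<omega>
    unfolding Yseq_Zg T.Z_def by (simp add: B_def)
  show ?thesis
  proof (intro exI[of _ T.Yinf] conjI allI)
    show "T.Yinf \<in> borel_measurable M" by (rule T.Yinf_meas)
    show "AE \<omega> in M. (\<lambda>n. Yseq m A Au n \<omega>) \<longlonglongrightarrow> T.Yinf \<omega>" using T.Yinf_conv by (simp add: YZ)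
    show "integrable M (\<lambda>\<omega>. (cmod (T.Yinf \<omega>))\<^sup>2)" by (rule T.Yinf_sq_int)
    show "integrable M (\<lambda>\<omega>. (cmod (Yseq m A Au n \<omega> - T.Yinf \<omega>))\<^sup>2)" for n
      using T.L2_bound(1)[of n] by (simp add: YZ)
    show "(\<lambda>n. \<integral>\<omega>. (cmod (Yseq m A Au n \<omega> - T.Yinf \<omega>))\<^sup>2 \<partial>M) \<longlonglongrightarrow> 0"
      using T.L2_conv by (simp add: YZ)
    show "(\<integral>\<omega>. (cmod (T.Yinf \<omega> - (\<integral>x. T.Yinf x \<partial>M)))\<^sup>2 \<partial>M)
             = ((real m)\<^sup>2 * (\<integral>\<omega>. (cmod (A \<omega>))\<^sup>2 \<partial>M) - 1)
               / (1 - real m * (\<integral>\<omega>. (cmod (A \<omega>))\<^sup>2 \<partial>M))"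
      using T.Var_Yinf T.E_Yinf T.L_def by (simp add: a_def)
  qed
qed

end
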